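(* Let $M$ be a generalized modularity matrix on $V$ such that $M\mathbb{1}=0$, with induced modularity function $Q$. Let $\{S_1,\dots,S_p\}$ be a partition of $V$ into pairwise disjoint nonempty subsets such that $Q(S_i)>0$ for all $i$ and $Q(S_i,S_j)<0$ for all $i\ne j$. Then $M$ has at least $p-1$ positive eigenvalues (counted with multiplicity).
   Context: Let $V=\{1,\dots,n\}$ and let $A\in\mathbb{R}^{n\times n}$ be the adjacency matrix of an undirected connected weighted graph on $V$, possibly with loops, i.e. $A$ is symmetric, entrywise nonnegative and irreducible. A generalized modularity matrix is any matrix $M=A+\Delta-\sigma vv^{\mathsf T}$ where $\Delta$ is a real diagonal matrix, $v\ne0$ is entrywise nonnegative, and $\sigma>0$. $\mathbb{1}$ is the all-ones vector and $\mathbb{1}_S$ the characteristic vector of $S\subseteq V$; $Q(S)=\mathbb{1}_S^{\mathsf T}M\mathbb{1}_S$, and for disjoint $S,T$, $Q(S,T)=\mathbb{1}_S^{\mathsf T}M\mathbb{1}_T$. *)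

theory Defs
  imports "Jordan_Normal_Form.Char_Poly"
begin

text \<open>Vertex set V = {0..<n} (0-based indexing of {1..n}).
  Edge relation of the weighted graph with adjacency matrix A.\<close>
definition graph_edges :: "real mat \<Rightarrow> (nat \<times> nat) set" where
  "graph_edges A = {(i, j). i < dim_row A \<and> j < dim_row A \<and> A $$ (i, j) > 0}"

definition connected_weighted_adjacency :: "nat \<Rightarrow> real mat \<Rightarrow> bool" where
  "connected_weighted_adjacency n A \<longleftrightarrow>
     A \<in> carrier_mat n n \<and> A\<^sup>T = A \<and>
     (\<forall>i<n. \<forall>j<n. A $$ (i, j) \<ge> 0) \<and>
     (\<forall>i<n. \<forall>j<n. (i, j) \<in> (graph_edges A)\<^sup>*)"

definition generalized_modularity_matrix :: "nat \<Rightarrow> real mat \<Rightarrow> bool" where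
  "generalized_modularity_matrix n M \<longleftrightarrow>
     (\<exists>A \<Delta> v \<sigma>. connected_weighted_adjacency n A \<and>
        \<Delta> \<in> carrier_mat n n \<and> (\<forall>i<n. \<forall>j<n. i \<noteq> j \<longrightarrow> \<Delta> $$ (i, j) = 0) \<and>
        v \<in> carrier_vec n \<and> v \<noteq> 0\<^sub>v n \<and> (\<forall>i<n. v $ i \<ge> 0) \<and>
        (\<sigma>::real) > 0 \<and>
        M = A + \<Delta> - \<sigma> \<cdot>\<^sub>m mat n n (\<lambda>(i, j). v $ i * v $ j))"

definition modQ2 :: "real mat \<Rightarrow> nat set \<Rightarrow> nat set \<Rightarrow> real" where
  "modQ2 M S T = (\<Sum>i\<in>S. \<Sum>j\<in>T. M $$ (i, j))"

definition modQ :: "real mat \<Rightarrow> nat set \<Rightarrow> real" where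
  "modQ M S = modQ2 M S S"

definition num_pos_eigenvalues :: "real mat \<Rightarrow> nat" where
  "num_pos_eigenvalues M =
     (\<Sum>a\<in>{a. a > 0 \<and> poly (char_poly M) a = 0}. order a (char_poly M))"

end

theory Submission
  imports Defs
begin



lemma mult_entry:
  assumes "A \<in> carrier_mat n k" "B \<in> carrier_mat k m" "i < n" "j < m"
  shows "(A * B) $$ (i,j) = (\<Sum>l<k. A $$ (i,l) * B $$ (l,j))"
  using assms by (simp add: scalar_prod_def atLeast0LessThan)

lemma sum_delta_left: "i < (n::nat) \<Longrightarrow> (\<Sum>k<n. (if i = k then 1 else 0) * (f k::real)) = f i"
proof -
  assume i: "i < n"
  have "(\<Sum>k<n. (if i = k then 1 else 0) * (f k::real)) = (\<Sum>k<n. if k = i then f i else 0)"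
    by (rule sum.cong, auto)
  thus ?thesis using i by simp
qed
lemma sum_delta_right: "i < (n::nat) \<Longrightarrow> (\<Sum>k<n. (f k::real) * (if k = i then 1 else 0)) = f i"
proof -
  assume i: "i < n"
  have "(\<Sum>k<n. (f k::real) * (if k = i then 1 else 0)) = (\<Sum>k<n. if k = i then f i else 0)"
    by (rule sum.cong, auto)
  thus ?thesis using i by simp
qed

lemma householder:
  fixes u :: "nat \<Rightarrow> real"
  assumes n: "0 < n" and u1: "(\<Sum>i<n. u i ^2) = 1" and u0: "u 0 \<le> 0"
  defines "w \<equiv> \<lambda>i. (if i = 0 then 1 else 0) - u i" and "a \<equiv> 1 - u 0"
  defines "H \<equiv> mat n n (\<lambda>(i,j). (if i = j then 1 else 0) - w i * w j / a)"
  shows "H \<in> carrier_mat n n" "H\<^sup>T = H" "H * H = 1\<^sub>m n" "\<forall>i<n. H$$(i,0) = u i"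
proof -
  have a: "a > 0" using u0 by (simp add: a_def)
  show Hc: "H \<in> carrier_mat n n" by (simp add: H_def)
  show "H\<^sup>T = H" by (rule eq_matI, auto simp: H_def)
  have ww: "(\<Sum>k<n. w k * w k) = 2 * a"
  proof -
    have "(\<Sum>k<n. w k * w k) = (\<Sum>k<n. (if k = 0 then 1 - 2 * u k else 0) + u k ^ 2)"
      by (rule sum.cong, auto simp: w_def power2_eq_square algebra_simps)
    also have "\<dots> = 1 - 2 * u 0 + 1" using n u1 by (simp add: sum.distrib)
    finally show ?thesis by (simp add: a_def)
  qed
  show "H * H = 1\<^sub>m n"
  proof (rule eq_matI)
    fix i j assume i: "i < dim_row (1\<^sub>m n :: real mat)" and j: "j < dim_col (1\<^sub>m n :: real mat)"
    hence i: "i < n" and j: "j < n" by auto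
    have "(H * H) $$ (i,j) = (\<Sum>k<n. ((if i = k then 1 else 0) - w i * w k / a) * ((if k = j then 1 else 0) - w k * w j / a))"
      by (subst mult_entry[OF Hc Hc i j], rule sum.cong, insert i j, auto simp: H_def)
    also have "\<dots> = (\<Sum>k<n. (if i = k then 1 else 0) * (if k = j then 1 else 0))
        - (\<Sum>k<n. (if i = k then 1 else 0) * (w k * w j / a))
        - (\<Sum>k<n. (w i * w k / a) * (if k = j then 1 else 0))
        + w i * w j / (a * a) * (\<Sum>k<n. w k * w k)"
      by (simp add: algebra_simps sum.distrib sum_subtractf sum_distrib_left sum_divide_distrib)
    also have "\<dots> = (if i = j then 1 else 0) - w i * w j / a - w i * w j / a + w i * w j / (a * a) * (2 * a)"
      by (subst sum_delta_left[OF i], subst sum_delta_left[OF i], subst sum_delta_right[OF j], subst ww, simp)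
    also have "\<dots> = (if i = j then 1 else 0)" using a by (simp add: field_simps)
    finally show "(H * H) $$ (i,j) = 1\<^sub>m n $$ (i,j)" using i j by simp
  qed (insert Hc, auto)
  show "\<forall>i<n. H$$(i,0) = u i"
  proof (intro allI impI)
    fix i assume i: "i < n"
    have "H $$ (i,0) = (if i = 0 then 1 else 0) - w i * w 0 / a" using i n by (simp add: H_def)
    also have "w 0 = a" by (simp add: w_def a_def)
    finally show "H$$(i,0) = u i" using a by (simp add: w_def)
  qed
qed



lemma sym_swap:
  fixes M :: "nat \<Rightarrow> nat \<Rightarrow> real"
  assumes "\<forall>i<n. \<forall>j<n. M i j = M j i"
  shows "(\<Sum>i<n. y i * (\<Sum>j<n. M i j * x j)) = (\<Sum>i<n. x i * (\<Sum>j<n. M i j * y j))"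
proof -
  have "(\<Sum>i<n. y i * (\<Sum>j<n. M i j * x j)) = (\<Sum>i<n. \<Sum>j<n. y i * M i j * x j)"
    by (simp add: sum_distrib_left mult.assoc)
  also have "\<dots> = (\<Sum>j<n. \<Sum>i<n. y i * M i j * x j)" by (rule sum.swap)
  also have "\<dots> = (\<Sum>j<n. x j * (\<Sum>i<n. M j i * y i))"
    by (simp add: sum_distrib_left, rule sum.cong, simp, rule sum.cong, insert assms, auto)
  finally show ?thesis .
qed

lemma real_eig:
  fixes M :: "real mat"
  assumes Mc: "M \<in> carrier_mat n n" and n: "0 < n" and sym: "\<forall>i<n. \<forall>j<n. M$$(i,j) = M$$(j,i)"
  shows "\<exists>r z. (\<exists>i<n. z i \<noteq> 0) \<and> (\<forall>i<n. (\<Sum>j<n. M$$(i,j) * z j) = r * z i)"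
proof -
  define MC where "MC = map_mat complex_of_real M"
  have MCc: "MC \<in> carrier_mat n n" using Mc by (simp add: MC_def)
  from char_poly_factorized[OF MCc] obtain as where
    cp: "char_poly MC = (\<Prod>a\<leftarrow>as. [:- a, 1:])" and len: "length as = n" by blast
  define a where "a = as ! 0"
  have "a \<in> set as" using len n by (simp add: a_def)
  hence "poly (char_poly MC) a = 0" unfolding cp
    by (rule linear_poly_root)
  hence "eigenvalue MC a" using eigenvalue_root_char_poly[OF MCc] by simp
  then obtain v where "eigenvector MC v a" unfolding eigenvalue_def by blast
  hence vc: "v \<in> carrier_vec n" and v0: "v \<noteq> 0\<^sub>v n" and ev: "MC *\<^sub>v v = a \<cdot>\<^sub>v v"
    unfolding eigenvector_def using MCc by auto
  define x where "x = (\<lambda>j. Re (v $ j))"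
  define y where "y = (\<lambda>j. Im (v $ j))"
  have eq: "(\<Sum>j<n. complex_of_real (M$$(i,j)) * v$j) = a * v$i" if i: "i < n" for i
  proof -
    have "(MC *\<^sub>v v) $ i = (a \<cdot>\<^sub>v v) $ i" using ev by simp
    thus ?thesis using i Mc vc by (simp add: MC_def scalar_prod_def atLeast0LessThan)
  qed
  have eqx: "(\<Sum>j<n. M$$(i,j) * x j) = Re a * x i - Im a * y i" if i: "i < n" for i
    using arg_cong[OF eq[OF i], of Re] by (simp add: Re_sum x_def y_def)
  have eqy: "(\<Sum>j<n. M$$(i,j) * y j) = Im a * x i + Re a * y i" if i: "i < n" for i
    using arg_cong[OF eq[OF i], of Im] by (simp add: Im_sum x_def y_def)
  have "(\<Sum>i<n. y i * (\<Sum>j<n. M$$(i,j) * x j)) = (\<Sum>i<n. x i * (\<Sum>j<n. M$$(i,j) * y j))"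
    by (rule sym_swap, insert sym, auto)
  also have "(\<Sum>i<n. y i * (\<Sum>j<n. M$$(i,j) * x j)) = (\<Sum>i<n. Re a * (x i * y i) - Im a * (y i * y i))"
    by (rule sum.cong, simp, subst eqx, auto simp: algebra_simps)
  also have "(\<Sum>i<n. x i * (\<Sum>j<n. M$$(i,j) * y j)) = (\<Sum>i<n. Im a * (x i * x i) + Re a * (x i * y i))"
    by (rule sum.cong, simp, subst eqy, auto simp: algebra_simps)
  finally have "Im a * ((\<Sum>i<n. x i * x i) + (\<Sum>i<n. y i * y i)) = 0"
    by (simp add: sum.distrib sum_subtractf sum_distrib_left[symmetric] algebra_simps)
  moreover have "\<exists>i<n. v $ i \<noteq> 0"
  proof (rule ccontr)
    assume "\<not> (\<exists>i<n. v $ i \<noteq> 0)"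
    hence "v = 0\<^sub>v n" using vc by (intro eq_vecI) auto
    with v0 show False by simp
  qed
  then obtain i where i: "i < n" and vi: "v $ i \<noteq> 0" by blast
  have pos: "(\<Sum>i<n. x i * x i) + (\<Sum>i<n. y i * y i) > 0"
  proof -
    have "x i * x i + y i * y i > 0" using vi
      by (simp add: x_def y_def complex_eq_iff) (smt (verit) not_sum_squares_lt_zero sum_squares_eq_zero_iff)
    moreover have "x i * x i \<le> (\<Sum>i<n. x i * x i)"
      by (rule member_le_sum[of i "{..<n}" "\<lambda>i. x i * x i"], insert i, auto)
    moreover have "y i * y i \<le> (\<Sum>i<n. y i * y i)"
      by (rule member_le_sum[of i "{..<n}" "\<lambda>i. y i * y i"], insert i, auto)
    ultimately show ?thesis by linarith
  qed
  ultimately have ia: "Im a = 0" by simp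
  show ?thesis
  proof (cases "\<exists>i<n. x i \<noteq> 0")
    case True
    thus ?thesis using eqx ia by (intro exI[of _ "Re a"] exI[of _ x]) auto
  next
    case False
    hence "y i \<noteq> 0" using i vi by (auto simp: x_def y_def complex_eq_iff)
    thus ?thesis using eqy ia False i by (intro exI[of _ "Re a"] exI[of _ y]) auto
  qed
qed


lemma real_eig_norm:
  fixes M :: "real mat"
  assumes Mc: "M \<in> carrier_mat n n" and n: "0 < n" and sym: "\<forall>i<n. \<forall>j<n. M$$(i,j) = M$$(j,i)"
  shows "\<exists>r u. (\<Sum>i<n. u i ^ 2) = 1 \<and> u 0 \<le> 0 \<and> (\<forall>i<n. (\<Sum>j<n. M$$(i,j) * u j) = r * u i)"
proof -
  obtain r z where nz: "\<exists>i<n. z i \<noteq> 0" and ev: "\<forall>i<n. (\<Sum>j<n. M$$(i,j) * z j) = r * z i"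
    using real_eig[OF Mc n sym] by blast
  define s where "s = (\<Sum>i<n. z i ^ 2)"
  from nz obtain i where i: "i < n" "z i \<noteq> 0" by blast
  have "z i ^ 2 \<le> s" unfolding s_def by (rule member_le_sum, insert i, auto)
  moreover have "z i ^ 2 > 0" using i by simp
  ultimately have s: "s > 0" by linarith
  define c where "c = (if z 0 > 0 then -1 else 1) / sqrt s"
  have c2: "c ^ 2 * s = 1" using s by (simp add: c_def power_divide)
  show ?thesis
  proof (intro exI[of _ r] exI[of _ "\<lambda>i. c * z i"] conjI allI impI)
    show "(\<Sum>i<n. (c * z i) ^ 2) = 1" using c2 by (simp add: power_mult_distrib sum_distrib_left[symmetric] s_def)
    show "c * z 0 \<le> 0" using s by (auto simp: c_def divide_nonpos_pos mult_le_0_iff)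
    fix i assume i: "i < n"
    have "(\<Sum>j<n. M$$(i,j) * (c * z j)) = c * (\<Sum>j<n. M$$(i,j) * z j)"
      by (simp add: sum_distrib_left algebra_simps)
    thus "(\<Sum>j<n. M$$(i,j) * (c * z j)) = r * (c * z i)" using ev i by simp
  qed
qed

definition diagm :: "nat \<Rightarrow> (nat \<Rightarrow> real) \<Rightarrow> real mat" where
  "diagm n d = mat n n (\<lambda>(i,j). if i = j then d i else 0)"

lemma diagm_carrier[simp]: "diagm n d \<in> carrier_mat n n" by (simp add: diagm_def)

lemma udu_entry:
  assumes U: "U \<in> carrier_mat n n" and i: "i < n" and j: "j < n"
  shows "(U * diagm n d * U\<^sup>T) $$ (i,j) = (\<Sum>k<n. U$$(i,k) * d k * U$$(j,k))"
proof -
  have UD: "U * diagm n d \<in> carrier_mat n n" using U by simp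
  have "(U * diagm n d * U\<^sup>T) $$ (i,j) = (\<Sum>k<n. (U * diagm n d) $$ (i,k) * U\<^sup>T $$ (k,j))"
    by (rule mult_entry[OF UD _ i j], insert U, simp)
  also have "\<dots> = (\<Sum>k<n. U$$(i,k) * d k * U$$(j,k))"
  proof (rule sum.cong[OF refl])
    fix k assume k: "k \<in> {..<n}"
    have "(U * diagm n d) $$ (i,k) = (\<Sum>l<n. U$$(i,l) * (diagm n d) $$ (l,k))"
      by (rule mult_entry[OF U _ i], insert k, auto)
    also have "\<dots> = (\<Sum>l<n. (U$$(i,l) * d l) * (if l = k then 1 else 0))"
      by (rule sum.cong, insert k, auto simp: diagm_def)
    also have "\<dots> = U$$(i,k) * d k" using k by (subst sum_delta_right, auto)
    finally show "(U * diagm n d) $$ (i,k) * U\<^sup>T $$ (k,j) = U$$(i,k) * d k * U$$(j,k)"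
      using k j U by simp
  qed
  finally show ?thesis .
qed

lemma utu_entry:
  assumes U: "U \<in> carrier_mat n n" and i: "i < n" and j: "j < n"
  shows "(U\<^sup>T * U) $$ (i,j) = (\<Sum>k<n. U$$(k,i) * U$$(k,j))"
  by (subst mult_entry[of _ n n _ n], insert U i j, auto)



lemma mult_sq_carrier: "A \<in> carrier_mat n n \<Longrightarrow> B \<in> carrier_mat n n \<Longrightarrow> A * B \<in> carrier_mat n n"
  by (metis mult_carrier_mat)

lemma spectral:
  fixes M :: "real mat"
  assumes "M \<in> carrier_mat n n" "\<forall>i<n. \<forall>j<n. M$$(i,j) = M$$(j,i)"
  shows "\<exists>U d. U \<in> carrier_mat n n \<and> U\<^sup>T * U = 1\<^sub>m n \<and> M = U * diagm n d * U\<^sup>T"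
  using assms
proof (induction n arbitrary: M)
  case 0
  show ?case
    by (intro exI[of _ "1\<^sub>m 0"] exI[of _ "\<lambda>_. 0"] conjI, simp, simp, rule eq_matI, insert 0, auto)
next
  case (Suc m M)
  let ?n = "Suc m"
  have Mc: "M \<in> carrier_mat ?n ?n" and sym: "\<forall>i<?n. \<forall>j<?n. M$$(i,j) = M$$(j,i)" using Suc by auto
  obtain r u where u1: "(\<Sum>i<?n. u i ^ 2) = 1" and u0: "u 0 \<le> 0"
    and ev: "\<forall>i<?n. (\<Sum>j<?n. M$$(i,j) * u j) = r * u i"
    using real_eig_norm[OF Mc _ sym] by blast
  define H where "H = mat ?n ?n (\<lambda>(i,j). (if i = j then 1 else 0) -
     ((\<lambda>i. (if i = 0 then 1 else 0) - u i) i) * ((\<lambda>i. (if i = 0 then 1 else 0) - u i) j) / (1 - u 0))"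
  note hh = householder[OF _ u1 u0, folded H_def]
  have Hc: "H \<in> carrier_mat ?n ?n" and HT: "H\<^sup>T = H" and HH: "H * H = 1\<^sub>m ?n"
    and H0: "\<forall>i<?n. H$$(i,0) = u i" using hh by auto
  have MT: "M\<^sup>T = M" by (rule eq_matI, insert Mc sym, auto)
  define C where "C = H * M * H"
  have Cc: "C \<in> carrier_mat ?n ?n" using Hc Mc by (simp add: C_def)
  have CT: "C\<^sup>T = C" unfolding C_def
    by (subst transpose_mult[of _ ?n ?n], insert Hc Mc, auto simp: transpose_mult[OF Hc Mc] HT MT)
  have Csym: "C$$(i,j) = C$$(j,i)" if "i < ?n" "j < ?n" for i j
    using arg_cong[OF CT, of "\<lambda>A. A $$ (j,i)"] that Cc by auto
  have Ccol: "C$$(i,0) = (if i = 0 then r else 0)" if i: "i < ?n" for i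
  proof -
    have HM: "H * M \<in> carrier_mat ?n ?n" using Hc Mc by simp
    have "C$$(i,0) = (\<Sum>k<?n. (H*M)$$(i,k) * H$$(k,0))"
      unfolding C_def by (rule mult_entry[OF HM Hc i], simp)
    also have "\<dots> = (\<Sum>k<?n. (\<Sum>l<?n. H$$(i,l) * M$$(l,k)) * u k)"
      by (rule sum.cong, simp, subst mult_entry[OF Hc Mc i], insert H0, auto)
    also have "\<dots> = (\<Sum>k<?n. \<Sum>l<?n. H$$(i,l) * M$$(l,k) * u k)"
      by (simp only: sum_distrib_right)
    also have "\<dots> = (\<Sum>l<?n. \<Sum>k<?n. H$$(i,l) * M$$(l,k) * u k)"
      by (rule sum.swap)
    also have "\<dots> = (\<Sum>l<?n. H$$(i,l) * (\<Sum>k<?n. M$$(l,k) * u k))"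
      by (simp only: sum_distrib_left mult.assoc)
    also have "\<dots> = (\<Sum>l<?n. r * (H$$(i,l) * H$$(l,0)))"
    proof (rule sum.cong[OF refl])
      fix l assume "l \<in> {..<?n}"
      hence l: "l < ?n" by simp
      have "(\<Sum>k<?n. M$$(l,k) * u k) = r * u l" using ev l by blast
      moreover have "H$$(l,0) = u l" using H0 l by blast
      ultimately show "H$$(i,l) * (\<Sum>k<?n. M$$(l,k) * u k) = r * (H$$(i,l) * H$$(l,0))" by simp
    qed
    also have "\<dots> = r * (\<Sum>l<?n. H$$(i,l) * H$$(l,0))"
      by (simp only: sum_distrib_left)
    also have "(\<Sum>l<?n. H$$(i,l) * H$$(l,0)) = (H * H) $$ (i,0)"
      by (rule mult_entry[OF Hc Hc i, symmetric], simp)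
    finally show ?thesis using HH i by simp
  qed
  define M' where "M' = mat m m (\<lambda>(i,j). C$$(Suc i, Suc j))"
  have M'c: "M' \<in> carrier_mat m m" by (simp add: M'_def)
  have M'sym: "\<forall>i<m. \<forall>j<m. M'$$(i,j) = M'$$(j,i)" using Csym by (auto simp: M'_def)
  from Suc.IH[OF M'c M'sym] obtain U' d' where U'c: "U' \<in> carrier_mat m m"
    and U'U': "U'\<^sup>T * U' = 1\<^sub>m m" and M'eq: "M' = U' * diagm m d' * U'\<^sup>T" by blast
  define U2 where "U2 = mat ?n ?n (\<lambda>(i,j). if i = 0 then (if j = 0 then 1 else 0)
     else if j = 0 then 0 else U'$$(i-1,j-1))"
  define d where "d = (\<lambda>k. if k = 0 then r else d' (k - 1))"
  have U2c: "U2 \<in> carrier_mat ?n ?n" by (simp add: U2_def)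
  have U2U2: "U2\<^sup>T * U2 = 1\<^sub>m ?n"
  proof (rule eq_matI)
    fix i j assume "i < dim_row (1\<^sub>m ?n :: real mat)" "j < dim_col (1\<^sub>m ?n :: real mat)"
    hence i: "i < ?n" and j: "j < ?n" by auto
    have "(U2\<^sup>T * U2) $$ (i,j) = (\<Sum>k<?n. U2$$(k,i) * U2$$(k,j))" by (rule utu_entry[OF U2c i j])
    also have "\<dots> = U2$$(0,i) * U2$$(0,j) + (\<Sum>k<m. U2$$(Suc k,i) * U2$$(Suc k,j))"
      by (rule sum.lessThan_Suc_shift)
    also have "\<dots> = 1\<^sub>m ?n $$ (i,j)"
    proof (cases i)
      case 0
      thus ?thesis using i j by (simp add: U2_def)
    next
      case (Suc i')
      note i' = this
      show ?thesis
      proof (cases j)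
        case 0
        thus ?thesis using i j i' by (simp add: U2_def)
      next
        case (Suc j')
        have "(\<Sum>k<m. U2$$(Suc k,i) * U2$$(Suc k,j)) = (\<Sum>k<m. U'$$(k,i') * U'$$(k,j'))"
          by (rule sum.cong, insert i j i' Suc, auto simp: U2_def)
        also have "\<dots> = (U'\<^sup>T * U') $$ (i',j')" by (rule utu_entry[OF U'c, symmetric], insert i j i' Suc, auto)
        finally show ?thesis using i j i' Suc U'U' by (simp add: U2_def)
      qed
    qed
    finally show "(U2\<^sup>T * U2) $$ (i,j) = 1\<^sub>m ?n $$ (i,j)" .
  qed (insert U2c, auto)
  have Ceq: "C = U2 * diagm ?n d * U2\<^sup>T"
  proof (rule eq_matI)
    fix i j assume "i < dim_row (U2 * diagm ?n d * U2\<^sup>T)" "j < dim_col (U2 * diagm ?n d * U2\<^sup>T)"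
    hence i: "i < ?n" and j: "j < ?n" using U2c by auto
    have "(U2 * diagm ?n d * U2\<^sup>T) $$ (i,j) = (\<Sum>k<?n. U2$$(i,k) * d k * U2$$(j,k))" by (rule udu_entry[OF U2c i j])
    also have "\<dots> = U2$$(i,0) * d 0 * U2$$(j,0) + (\<Sum>k<m. U2$$(i,Suc k) * d (Suc k) * U2$$(j,Suc k))"
      by (rule sum.lessThan_Suc_shift)
    also have "\<dots> = C $$ (i,j)"
    proof (cases i)
      case 0
      thus ?thesis using i j Ccol[OF j] Csym[OF i j] by (simp add: U2_def d_def)
    next
      case (Suc i')
      note i' = this
      show ?thesis
      proof (cases j)
        case 0
        thus ?thesis using i j i' Ccol[OF i] by (simp add: U2_def d_def)
      next
        case (Suc j')
        have "(\<Sum>k<m. U2$$(i,Suc k) * d (Suc k) * U2$$(j,Suc k)) = (\<Sum>k<m. U'$$(i',k) * d' k * U'$$(j',k))"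
          by (rule sum.cong, insert i j i' Suc, auto simp: U2_def d_def)
        also have "\<dots> = M' $$ (i',j')" unfolding M'eq by (rule udu_entry[OF U'c, symmetric], insert i j i' Suc, auto)
        finally show ?thesis using i j i' Suc by (simp add: U2_def M'_def)
      qed
    qed
    finally show "C $$ (i,j) = (U2 * diagm ?n d * U2\<^sup>T) $$ (i,j)" by simp
  qed (insert U2c Cc, auto)
  define U where "U = H * U2"
  have Uc: "U \<in> carrier_mat ?n ?n" using Hc U2c by (simp add: U_def)
  have UT: "U\<^sup>T = U2\<^sup>T * H" unfolding U_def by (simp add: transpose_mult[OF Hc U2c] HT)
  have U2T: "U2\<^sup>T \<in> carrier_mat ?n ?n" using U2c by simp
  have "U\<^sup>T * U = (U2\<^sup>T * H) * (H * U2)" by (simp only: UT, simp add: U_def)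
  also have "\<dots> = U2\<^sup>T * (H * H) * U2" using Hc U2c U2T
    by (simp add: assoc_mult_mat[of _ ?n ?n _ ?n _ ?n] mult_sq_carrier)
  also have "\<dots> = 1\<^sub>m ?n" using HH U2U2 U2c by simp
  finally have UU: "U\<^sup>T * U = 1\<^sub>m ?n" .
  have "M = (H * H) * M * (H * H)" using HH Mc by simp
  also have "\<dots> = H * C * H" unfolding C_def using Hc Mc
    by (simp add: assoc_mult_mat[of _ ?n ?n _ ?n _ ?n] mult_sq_carrier)
  also have "\<dots> = H * U2 * diagm ?n d * (U2\<^sup>T * H)" unfolding Ceq using Hc U2c U2T
    by (simp add: assoc_mult_mat[of _ ?n ?n _ ?n _ ?n] mult_sq_carrier)
  also have "\<dots> = U * diagm ?n d * U\<^sup>T" by (simp only: UT, simp add: U_def)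
  finally show ?case using Uc UU by blast
qed



lemma char_poly_diagm: "char_poly (diagm n d) = prod_list (map (\<lambda>k. [:- d k, 1:]) [0..<n])"
proof -
  have Dc: "diagm n d \<in> carrier_mat n n" by simp
  have ut: "upper_triangular (diagm n d)" by (auto simp: upper_triangular_def diagm_def)
  have dm: "diag_mat (diagm n d) = map d [0..<n]"
    by (rule nth_equalityI, auto simp: diag_mat_def diagm_def)
  show ?thesis using char_poly_upper_triangular[OF Dc ut] unfolding dm by (simp add: o_def)
qed

lemma num_pos_diagm: "num_pos_eigenvalues (diagm n d) = card {k. k < n \<and> d k > 0}"
proof -
  define \<chi> where "\<chi> = char_poly (diagm n d)"
  have chi: "\<chi> = prod_list (map (\<lambda>k. [:- d k, 1:]) [0..<n])" unfolding \<chi>_def by (rule char_poly_diagm)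
  have ord: "order a \<chi> = (\<Sum>k\<in>{0..<n}. if d k = a then 1 else 0)" for a
  proof -
    have "order a \<chi> = sum_list (map (order a) (map (\<lambda>k. [:- d k, 1:]) [0..<n]))"
      unfolding chi by (rule order_prod_list, auto)
    also have "\<dots> = sum_list (map (\<lambda>k. if d k = a then 1 else 0) [0..<n])"
      by (simp add: o_def order_linear')
    also have "\<dots> = (\<Sum>k\<in>{0..<n}. if d k = a then 1 else 0)"
      by (induct n, auto)
    finally show ?thesis .
  qed
  define P where "P = {k. k < n \<and> d k > 0}"
  have R: "{a. a > 0 \<and> poly \<chi> a = 0} = d ` P"
    unfolding chi P_def by (auto simp: poly_prod_list_zero_iff)
  have fin: "finite (d ` P)" unfolding P_def by simp
  have "num_pos_eigenvalues (diagm n d) = (\<Sum>a\<in>d ` P. \<Sum>k\<in>{0..<n}. if d k = a then 1 else 0)"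
    unfolding num_pos_eigenvalues_def \<chi>_def[symmetric] R by (rule sum.cong, auto simp: ord)
  also have "\<dots> = (\<Sum>k\<in>{0..<n}. \<Sum>a\<in>d ` P. if d k = a then 1 else 0)" by (rule sum.swap)
  also have "\<dots> = (\<Sum>k\<in>{0..<n}. if k \<in> P then 1 else 0)"
  proof (rule sum.cong[OF refl])
    fix k assume k: "k \<in> {0..<n}"
    have "(\<Sum>a\<in>d ` P. if d k = a then 1 else 0) = (if d k \<in> d ` P then 1 else 0)"
      using fin by (simp add: sum.delta)
    also have "(d k \<in> d ` P) = (k \<in> P)" using k unfolding P_def by auto
    finally show "(\<Sum>a\<in>d ` P. if d k = a then 1 else 0) = (if k \<in> P then 1 else (0::nat))" .
  qed
  also have "\<dots> = card P" unfolding P_def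
    by (simp add: sum.If_cases Int_def)
  finally show ?thesis unfolding P_def .
qed

lemma num_pos_spectral:
  assumes Mc: "M \<in> carrier_mat n n" and U: "U \<in> carrier_mat n n" and UU: "U\<^sup>T * U = 1\<^sub>m n"
    and Meq: "M = U * diagm n d * U\<^sup>T"
  shows "num_pos_eigenvalues M = card {k. k < n \<and> d k > 0}"
proof -
  have UT: "U\<^sup>T \<in> carrier_mat n n" using U by simp
  have UU': "U * U\<^sup>T = 1\<^sub>m n" by (rule mat_mult_left_right_inverse[OF UT U UU])
  have "similar_mat M (diagm n d)"
    by (rule similar_matI[OF _ UU' UU Meq], insert Mc U UT, auto)
  hence "char_poly M = char_poly (diagm n d)" by (rule char_poly_similar)
  thus ?thesis using num_pos_diagm[of n d] unfolding num_pos_eigenvalues_def by simp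
qed



lemma regroup:
  fixes n p :: nat
  assumes disj: "\<And>a b. a < p \<Longrightarrow> b < p \<Longrightarrow> a \<noteq> b \<Longrightarrow> S a \<inter> S b = {}"
    and un: "(\<Union>a<p. S a) = {0..<n}"
  shows "(\<Sum>i<n. f i) = (\<Sum>a<p. \<Sum>i\<in>S a. f i)"
proof -
  have fin: "finite (S a)" if "a < p" for a
  proof -
    have "S a \<subseteq> {0..<n}" using un that by auto
    thus ?thesis by (rule finite_subset) simp
  qed
  have "(\<Sum>i<n. f i) = sum f (\<Union>a<p. S a)" using un by (simp add: atLeast0LessThan)
  also have "\<dots> = (\<Sum>a<p. sum f (S a))"
    by (rule sum.UNION_disjoint, insert fin disj, auto)
  finally show ?thesis .
qed

lemma laplacian_pos:
  fixes B :: "nat \<Rightarrow> nat \<Rightarrow> real" and c :: "nat \<Rightarrow> real"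
  assumes sym: "\<And>a b. a < p \<Longrightarrow> b < p \<Longrightarrow> B a b = B b a"
    and rows: "\<And>a. a < p \<Longrightarrow> (\<Sum>b<p. B a b) = 0"
    and neg: "\<And>a b. a < p \<Longrightarrow> b < p \<Longrightarrow> a \<noteq> b \<Longrightarrow> B a b < 0"
    and ax: "ax < p" and bx: "bx < p" and cd: "c ax \<noteq> c bx"
  shows "(\<Sum>a<p. \<Sum>b<p. c a * c b * B a b) > 0"
proof -
  define t where "t = (\<lambda>a b. - B a b * (c a - c b)^2)"
  have tnn: "t a b \<ge> 0" if "a < p" "b < p" for a b
  proof (cases "a = b")
    case False
    have "- B a b \<ge> 0" using neg[OF that False] by simp
    thus ?thesis unfolding t_def by (intro mult_nonneg_nonneg, auto)
  qed (simp add: t_def)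
  have ab: "ax \<noteq> bx" using cd by auto
  have "- B ax bx > 0" using neg[OF ax bx ab] by simp
  moreover have "(c ax - c bx)^2 > 0" using cd by simp
  ultimately have tpos: "t ax bx > 0" unfolding t_def by (rule mult_pos_pos)
  have "t ax bx \<le> (\<Sum>b<p. t ax b)" by (rule member_le_sum, insert bx tnn ax, auto)
  also have "\<dots> \<le> (\<Sum>a<p. \<Sum>b<p. t a b)"
    by (rule member_le_sum[of ax "{..<p}" "\<lambda>a. \<Sum>b<p. t a b"], insert ax tnn, auto intro: sum_nonneg)
  finally have T: "(\<Sum>a<p. \<Sum>b<p. t a b) > 0" using tpos by linarith
  have e1: "(\<Sum>a<p. \<Sum>b<p. B a b * (c a)^2) = 0"
  proof -
    have "(\<Sum>a<p. \<Sum>b<p. B a b * (c a)^2) = (\<Sum>a<p. (\<Sum>b<p. B a b) * (c a)^2)"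
      by (simp only: sum_distrib_right)
    also have "\<dots> = 0" using rows by simp
    finally show ?thesis .
  qed
  have e2: "(\<Sum>a<p. \<Sum>b<p. B a b * (c b)^2) = 0"
  proof -
    have "(\<Sum>a<p. \<Sum>b<p. B a b * (c b)^2) = (\<Sum>b<p. \<Sum>a<p. B a b * (c b)^2)" by (rule sum.swap)
    also have "\<dots> = (\<Sum>b<p. \<Sum>a<p. B b a * (c b)^2)"
      by (rule sum.cong[OF refl], rule sum.cong[OF refl], simp add: sym)
    also have "\<dots> = (\<Sum>b<p. (\<Sum>a<p. B b a) * (c b)^2)"
      by (simp only: sum_distrib_right)
    also have "\<dots> = 0" using rows by simp
    finally show ?thesis .
  qed
  have tt: "t a b = 2 * (c a * c b * B a b) - B a b * (c a)^2 - B a b * (c b)^2" for a b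
    by (simp add: t_def power2_eq_square algebra_simps)
  have "(\<Sum>a<p. \<Sum>b<p. t a b) = (\<Sum>a<p. 2 * (\<Sum>b<p. c a * c b * B a b) - (\<Sum>b<p. B a b * (c a)^2) - (\<Sum>b<p. B a b * (c b)^2))"
    by (simp only: tt sum_subtractf sum_distrib_left)
  also have "\<dots> = 2 * (\<Sum>a<p. \<Sum>b<p. c a * c b * B a b)
     - (\<Sum>a<p. \<Sum>b<p. B a b * (c a)^2) - (\<Sum>a<p. \<Sum>b<p. B a b * (c b)^2)"
    by (simp only: sum_subtractf sum_distrib_left)
  finally show ?thesis using T e1 e2 by linarith
qed

lemma qf_spectral:
  fixes U :: "nat \<Rightarrow> nat \<Rightarrow> real"
  shows "(\<Sum>i<n. \<Sum>j<n. x i * (\<Sum>k<n. U i k * d k * U j k) * x j)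
     = (\<Sum>k<n. d k * (\<Sum>i<n. U i k * x i)^2)"
proof -
  have "(\<Sum>i<n. \<Sum>j<n. x i * (\<Sum>k<n. U i k * d k * U j k) * x j)
     = (\<Sum>i<n. \<Sum>j<n. \<Sum>k<n. d k * (U i k * x i) * (U j k * x j))"
  proof (rule sum.cong[OF refl], rule sum.cong[OF refl])
    fix i j
    have "x i * (\<Sum>k<n. U i k * d k * U j k) * x j = (\<Sum>k<n. x i * (U i k * d k * U j k) * x j)"
      by (simp only: sum_distrib_left sum_distrib_right)
    also have "\<dots> = (\<Sum>k<n. d k * (U i k * x i) * (U j k * x j))"
      by (rule sum.cong[OF refl], simp only: mult_ac)
    finally show "x i * (\<Sum>k<n. U i k * d k * U j k) * x j = (\<Sum>k<n. d k * (U i k * x i) * (U j k * x j))" .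
  qed
  also have "\<dots> = (\<Sum>i<n. \<Sum>k<n. \<Sum>j<n. d k * (U i k * x i) * (U j k * x j))"
    by (rule sum.cong[OF refl], rule sum.swap)
  also have "\<dots> = (\<Sum>k<n. \<Sum>i<n. \<Sum>j<n. d k * (U i k * x i) * (U j k * x j))"
    by (rule sum.swap)
  also have "\<dots> = (\<Sum>k<n. d k * (\<Sum>i<n. U i k * x i)^2)"
  proof (rule sum.cong[OF refl])
    fix k
    have "d k * (\<Sum>i<n. U i k * x i)^2 = d k * ((\<Sum>i<n. U i k * x i) * (\<Sum>j<n. U j k * x j))"
      by (simp only: power2_eq_square)
    also have "\<dots> = d k * (\<Sum>i<n. \<Sum>j<n. (U i k * x i) * (U j k * x j))"
      by (simp only: sum_product)
    also have "\<dots> = (\<Sum>i<n. \<Sum>j<n. d k * ((U i k * x i) * (U j k * x j)))"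
      by (simp add: sum_distrib_left)
    also have "\<dots> = (\<Sum>i<n. \<Sum>j<n. d k * (U i k * x i) * (U j k * x j))"
      by (simp only: mult.assoc)
    finally show "(\<Sum>i<n. \<Sum>j<n. d k * (U i k * x i) * (U j k * x j)) = d k * (\<Sum>i<n. U i k * x i)^2" by simp
  qed
  finally show ?thesis .
qed



theorem mainTheorem11:
  fixes n p :: nat and M :: "real mat" and S :: "nat \<Rightarrow> nat set"
  assumes "generalized_modularity_matrix n M"
    and "M *\<^sub>v vec n (\<lambda>_. 1) = 0\<^sub>v n"
    and "\<And>i. i < p \<Longrightarrow> S i \<noteq> {}"
    and "\<And>i j. i < p \<Longrightarrow> j < p \<Longrightarrow> i \<noteq> j \<Longrightarrow> S i \<inter> S j = {}"
    and "(\<Union>i<p. S i) = {0..<n}"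
    and "\<And>i. i < p \<Longrightarrow> modQ M (S i) > 0"
    and "\<And>i j. i < p \<Longrightarrow> j < p \<Longrightarrow> i \<noteq> j \<Longrightarrow> modQ2 M (S i) (S j) < 0"
  shows "num_pos_eigenvalues M \<ge> p - 1"
proof -
  note disj = assms(4) and un = assms(5)
  from assms(1) obtain A \<Delta> v \<sigma> where A: "connected_weighted_adjacency n A"
    and \<Delta>c: "\<Delta> \<in> carrier_mat n n" and \<Delta>d: "\<forall>i<n. \<forall>j<n. i \<noteq> j \<longrightarrow> \<Delta>$$(i,j) = 0"
    and Meq: "M = A + \<Delta> - \<sigma> \<cdot>\<^sub>m mat n n (\<lambda>(i, j). v $ i * v $ j)"
    unfolding generalized_modularity_matrix_def by blast
  from A have Ac: "A \<in> carrier_mat n n" and AT: "A\<^sup>T = A"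
    unfolding connected_weighted_adjacency_def by auto
  have Mc: "M \<in> carrier_mat n n" using Ac \<Delta>c Meq by auto
  have Msym: "\<forall>i<n. \<forall>j<n. M$$(i,j) = M$$(j,i)"
  proof (intro allI impI)
    fix i j assume i: "i < n" and j: "j < n"
    have "A$$(i,j) = A$$(j,i)" using arg_cong[OF AT, of "\<lambda>X. X$$(j,i)"] Ac i j by auto
    moreover have "\<Delta>$$(i,j) = \<Delta>$$(j,i)" using \<Delta>d i j by (cases "i = j") auto
    ultimately show "M$$(i,j) = M$$(j,i)" using Meq Ac \<Delta>c i j by simp
  qed
  obtain U d where Uc: "U \<in> carrier_mat n n" and UU: "U\<^sup>T * U = 1\<^sub>m n"
    and MU: "M = U * diagm n d * U\<^sup>T" using spectral[OF Mc Msym] by blast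
  define P where "P = {k. k < n \<and> d k > 0}"
  have np: "num_pos_eigenvalues M = card P" unfolding P_def by (rule num_pos_spectral[OF Mc Uc UU MU])
  have Ment: "M$$(i,j) = (\<Sum>k<n. U$$(i,k) * d k * U$$(j,k))" if "i < n" "j < n" for i j
    using udu_entry[OF Uc that, of d] MU by simp
  have Sn: "i < n" if "a < p" "i \<in> S a" for a i using un that by auto
  have rowsum: "(\<Sum>j<n. M$$(i,j)) = 0" if i: "i < n" for i
  proof -
    have "(M *\<^sub>v vec n (\<lambda>_. 1)) $ i = 0" using assms(2) i by simp
    thus ?thesis using Mc i by (simp add: scalar_prod_def atLeast0LessThan)
  qed
  show ?thesis
  proof (rule ccontr)
    assume "\<not> ?thesis"
    hence lt: "card P + 1 < p" using np by simp
    define K where "K = card P"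
    define ks where "ks = sorted_list_of_set P"
    have finP: "finite P" unfolding P_def by simp
    have ksl: "length ks = K" and kss: "set ks = P" using finP by (auto simp: ks_def K_def)
    define coef where "coef = (\<lambda>r a. if r < K then (\<Sum>i\<in>S a. U$$(i, ks!r)) else if a = p - 1 then 1 else (0::real))"
    define E where "E = mat\<^sub>r p p (\<lambda>r. if r = K + 1 then 0\<^sub>v p else vec p (\<lambda>a. coef r a))"
    have Ec: "E \<in> carrier_mat p p" by (simp add: E_def)
    have "det E = 0" unfolding E_def by (rule det_row_0, insert lt, auto simp: K_def)
    then obtain c where cc: "c \<in> carrier_vec p" and c0: "c \<noteq> 0\<^sub>v p" and Ec0: "E *\<^sub>v c = 0\<^sub>v p"
      using det_0_iff_vec_prod_zero[OF Ec] by blast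
    have ceq: "(\<Sum>a<p. coef r a * c$a) = 0" if r: "r < p" "r \<noteq> K + 1" for r
    proof -
      have "(E *\<^sub>v c) $ r = 0" using Ec0 r by simp
      thus ?thesis using r cc Ec by (simp add: E_def scalar_prod_def atLeast0LessThan)
    qed
    have "(\<Sum>a<p. coef K a * c$a) = 0" by (rule ceq, insert lt, auto simp: K_def)
    also have "(\<Sum>a<p. coef K a * c$a) = (\<Sum>a<p. if a = p - 1 then c$a else 0)"
      by (rule sum.cong, auto simp: coef_def)
    also have "\<dots> = c$(p-1)" using lt by simp
    finally have cp1: "c$(p-1) = 0" .
    have "\<exists>a<p. c$a \<noteq> 0"
    proof (rule ccontr)
      assume "\<not> (\<exists>a<p. c$a \<noteq> 0)"
      hence "c = 0\<^sub>v p" using cc by (intro eq_vecI) auto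
      with c0 show False by simp
    qed
    then obtain a0 where a0: "a0 < p" and ca0: "c$a0 \<noteq> 0" by blast
    define cf where "cf = (\<lambda>a. c$a)"
    define x where "x = (\<lambda>i. \<Sum>a<p. if i \<in> S a then cf a else 0)"
    have xval: "x i = cf a" if a: "a < p" and i: "i \<in> S a" for a i
    proof -
      have "x i = (\<Sum>b<p. if b = a then cf b else 0)" unfolding x_def
        by (rule sum.cong[OF refl], insert disj a i, auto)
      also have "\<dots> = cf a" using a by simp
      finally show ?thesis .
    qed
    define B where "B = (\<lambda>a b. modQ2 M (S a) (S b))"
    define Q where "Q = (\<Sum>i<n. \<Sum>j<n. x i * M$$(i,j) * x j)"
    have "Q = (\<Sum>a<p. \<Sum>i\<in>S a. \<Sum>j<n. x i * M$$(i,j) * x j)" unfolding Q_def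
      by (rule regroup[OF disj un])
    also have "\<dots> = (\<Sum>a<p. \<Sum>i\<in>S a. \<Sum>b<p. \<Sum>j\<in>S b. x i * M$$(i,j) * x j)"
      by (rule sum.cong[OF refl], rule sum.cong[OF refl], rule regroup[OF disj un])
    also have "\<dots> = (\<Sum>a<p. \<Sum>i\<in>S a. \<Sum>b<p. \<Sum>j\<in>S b. cf a * cf b * M$$(i,j))"
      by (intro sum.cong refl, simp add: xval)
    also have "\<dots> = (\<Sum>a<p. \<Sum>b<p. \<Sum>i\<in>S a. \<Sum>j\<in>S b. cf a * cf b * M$$(i,j))"
      by (rule sum.cong[OF refl], rule sum.swap)
    also have "\<dots> = (\<Sum>a<p. \<Sum>b<p. cf a * cf b * B a b)"
      by (intro sum.cong refl, simp add: B_def modQ2_def sum_distrib_left)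
    finally have Q1: "Q = (\<Sum>a<p. \<Sum>b<p. cf a * cf b * B a b)" .
    have Bsym: "B a b = B b a" if "a < p" "b < p" for a b
    proof -
      have "B a b = (\<Sum>j\<in>S b. \<Sum>i\<in>S a. M$$(i,j))" unfolding B_def modQ2_def by (rule sum.swap)
      also have "\<dots> = B b a" unfolding B_def modQ2_def
        by (intro sum.cong refl, insert Msym Sn that, auto)
      finally show ?thesis .
    qed
    have Brows: "(\<Sum>b<p. B a b) = 0" if a: "a < p" for a
    proof -
      have "(\<Sum>b<p. B a b) = (\<Sum>i\<in>S a. \<Sum>b<p. \<Sum>j\<in>S b. M$$(i,j))"
        unfolding B_def modQ2_def by (rule sum.swap)
      also have "\<dots> = (\<Sum>i\<in>S a. \<Sum>j<n. M$$(i,j))"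
        by (rule sum.cong[OF refl], rule regroup[OF disj un, symmetric])
      also have "\<dots> = 0" using rowsum Sn a by simp
      finally show ?thesis .
    qed
    have Q2: "Q > 0" unfolding Q1
      by (rule laplacian_pos[where B=B and c=cf and ax=a0 and bx="p - 1" and p=p], insert Bsym Brows assms(7) a0 lt ca0 cp1,
          auto simp: B_def cf_def)
    have "Q = (\<Sum>i<n. \<Sum>j<n. x i * (\<Sum>k<n. U$$(i,k) * d k * U$$(j,k)) * x j)"
      unfolding Q_def by (intro sum.cong refl, simp add: Ment)
    also have "\<dots> = (\<Sum>k<n. d k * (\<Sum>i<n. U$$(i,k) * x i)^2)" by (rule qf_spectral)
    finally have Q3: "Q = (\<Sum>k<n. d k * (\<Sum>i<n. U$$(i,k) * x i)^2)" .
    have "Q \<le> 0" unfolding Q3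
    proof (rule sum_nonpos)
      fix k assume k: "k \<in> {..<n}"
      show "d k * (\<Sum>i<n. U$$(i,k) * x i)^2 \<le> 0"
      proof (cases "k \<in> P")
        case True
        then obtain r where r: "r < K" and kr: "k = ks ! r" using kss ksl by (metis in_set_conv_nth)
        have "(\<Sum>i<n. U$$(i,k) * x i) = (\<Sum>a<p. \<Sum>i\<in>S a. U$$(i,k) * x i)" by (rule regroup[OF disj un])
        also have "\<dots> = (\<Sum>a<p. \<Sum>i\<in>S a. U$$(i,k) * cf a)"
          by (intro sum.cong refl, simp add: xval)
        also have "\<dots> = (\<Sum>a<p. coef r a * c$a)"
          by (intro sum.cong refl, simp add: coef_def r kr cf_def sum_distrib_right)
        also have "\<dots> = 0" by (rule ceq, insert r lt, auto simp: K_def)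
        finally show ?thesis by simp
      next
        case False
        hence "d k \<le> 0" using k by (auto simp: P_def)
        thus ?thesis by (simp add: mult_nonpos_nonneg)
      qed
    qed
    with Q2 show False by simp
  qed
qed


end
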